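(* Let $k\ge1$ and consider the exponential mixture density on $(0,\infty)$ $$f(x\mid\lambda,\boldsymbol\gamma,\mathbf p)=\sum_{i=1}^k\frac{p_i}{\lambda_i}e^{-x/\lambda_i},\qquad\lambda_i=\frac{\lambda\gamma_i}{p_i},$$ where $\lambda>0$, $p_i>0$ with $\sum_ip_i=1$, and $\gamma_i>0$ with $\sum_i\gamma_i=1$ (so that $\lambda$ is the mean of the mixture). Put the prior $\lambda^{-1}\,\mathrm d\lambda\times\pi_0(\mathrm d(\boldsymbol\gamma,\mathbf p))$ where $\pi_0$ is any proper probability distribution on $(\boldsymbol\gamma,\mathbf p)$. Then for any sample $x_1,\dots,x_n>0$ with $n\ge1$, the posterior distribution is proper, i.e. $0<\int\prod_{j=1}^n f(x_j\mid\lambda,\boldsymbol\gamma,\mathbf p)\,\lambda^{-1}\mathrm d\lambda\,\pi_0(\mathrm d(\boldsymbol\gamma,\mathbf p))<\infty$.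
   Context: A posterior is proper when likelihood times prior has finite positive total integral over the parameter space. *)

theory Defs
  imports "HOL-Probability.Probability"
begin

definition comp_scale :: "real \<Rightarrow> real^'k \<Rightarrow> real^'k \<Rightarrow> 'k \<Rightarrow> real" where
  "comp_scale l g p i = l * g$i / p$i"

definition mix_density :: "real \<Rightarrow> real^'k \<Rightarrow> real^'k \<Rightarrow> real \<Rightarrow> real" where
  "mix_density l g p x =
     (\<Sum>i\<in>UNIV. p$i / comp_scale l g p i * exp (- x / comp_scale l g p i))"

definition prob_simplex :: "(real^'k) set" where
  "prob_simplex = {v. (\<forall>i. v$i > 0) \<and> (\<Sum>i\<in>UNIV. v$i) = 1}"

end

theory Submission
  imports Defs
begin

lemma exp_pow_fact: fixes y :: real assumes "y \<ge> 0" shows "y ^ m / fact m \<le> exp y"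
proof -
  have e: "exp y = (\<Sum>n<Suc m. inverse(fact n) *\<^sub>R (y ^ n)) + (\<Sum>n. inverse(fact (n + Suc m)) *\<^sub>R (y ^ (n + Suc m)))"
    by (rule exp_first_terms)
  have s: "summable (\<lambda>n. inverse(fact (n + Suc m)) *\<^sub>R (y ^ (n + Suc m)))"
    using summable_ignore_initial_segment[OF summable_exp_generic[of y], of "Suc m"] by simp
  have t: "0 \<le> (\<Sum>n. inverse(fact (n + Suc m)) *\<^sub>R (y ^ (n + Suc m)))"
    by (rule suminf_nonneg[OF s]) (use assms in simp)
  have "y ^ m / fact m \<le> (\<Sum>n<Suc m. inverse(fact n) *\<^sub>R (y ^ n))"
    using member_le_sum[of m "{..<Suc m}" "\<lambda>n. inverse(fact n) *\<^sub>R (y ^ n)"] assms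
    by (simp add: divide_inverse mult.commute)
  then show ?thesis using e t by linarith
qed

definition G :: "nat \<Rightarrow> real \<Rightarrow> real \<Rightarrow> ennreal" where
  "G n \<sigma> t = ennreal ((\<sigma>/t)^n * exp (-\<sigma>/t) / t) * indicator {0<..} t"

lemma G_meas[measurable]: "G n \<sigma> \<in> borel_measurable borel"
  unfolding G_def by measurable

lemma aux_div: fixes a f e :: real assumes "a / f \<le> e" "f > 0" "e > 0" shows "a / e \<le> f"
  using assms by (simp add: field_simps)

lemma G1_bound: assumes "n \<ge> 1"
  shows "G n 1 t \<le> ennreal (fact (Suc n)) * indicator {0..1} t + ennreal (t powr -2) * indicator {1..} t"
proof (cases "t > 0")
  case False then show ?thesis by (simp add: G_def)
next
  case True
  have eq: "(1/t)^n * exp (-1/t) / t = (1/t)^(Suc n) / exp (1/t)"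
    using True by (simp add: exp_minus field_simps)
  show ?thesis
  proof (cases "t \<le> 1")
    case True
    have "(1/t)^(Suc n) / fact (Suc n) \<le> exp (1/t)" using \<open>t>0\<close> by (intro exp_pow_fact) simp
    then have "(1/t)^(Suc n) / exp (1/t) \<le> fact (Suc n)"
      using aux_div[of "(1/t)^(Suc n)" "fact (Suc n)" "exp (1/t)"] by simp
    then have "ennreal ((1/t)^n * exp (-1/t) / t) \<le> ennreal (fact (Suc n))"
      using eq by (intro ennreal_leI) simp
    then show ?thesis using True \<open>t>0\<close> unfolding G_def
      by (auto intro: add_increasing2 simp del: fact_Suc)
  next
    case False
    have a: "(1/t)^(Suc n) \<le> (1/t)^2" using False assms
      by (intro power_decreasing) auto
    have b: "(1/t)^(Suc n) / exp (1/t) \<le> (1/t)^(Suc n)"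
      using \<open>t>0\<close> by (simp add: divide_le_eq)
    have c: "(1/t)^2 = t powr -2" using \<open>t>0\<close>
      by (simp add: powr_minus powr_realpow divide_inverse power_inverse)
    have "(1/t)^n * exp (-1/t) / t \<le> t powr -2" using eq a b c by linarith
    then show ?thesis using False by (simp add: G_def)
  qed
qed

lemma K_finite: assumes "n \<ge> 1" shows "(\<integral>\<^sup>+t. G n 1 t \<partial>lborel) < \<infinity>"
proof -
  have h1: "(\<integral>\<^sup>+t. ennreal (t powr -2) * indicator {1..} t \<partial>lborel) = (\<integral>\<^sup>+t. ennreal (indicator {1..} t * t powr -2) \<partial>lborel)"
    by (intro nn_integral_cong) (auto split: split_indicator)
  have h2: "(\<integral>\<^sup>+t. ennreal (indicator {1..} t * t powr -2) \<partial>lborel) = ennreal (-(1 powr (-2+1)) / (-2+1))"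
    by (rule nn_integral_has_integral_lebesgue[OF _ has_integral_powr_to_inf]) auto
  have "(\<integral>\<^sup>+t. G n 1 t \<partial>lborel) \<le> (\<integral>\<^sup>+t. ennreal (fact (Suc n)) * indicator {0..1} t + ennreal (t powr -2) * indicator {1..} t \<partial>lborel)"
    by (intro nn_integral_mono G1_bound assms)
  also have "\<dots> = ennreal (fact (Suc n)) * emeasure lborel {0::real..1} + (\<integral>\<^sup>+t. ennreal (t powr -2) * indicator {1..} t \<partial>lborel)"
    apply (subst nn_integral_add)
      apply measurable
    apply (subst nn_integral_cmult_indicator)
     apply simp
    apply (rule refl)
    done
  also have "\<dots> = ennreal (fact (Suc n)) + ennreal 1"
    apply (subst h1)
    apply (subst h2)
    apply simp
    done
  finally show ?thesis
    by (rule le_less_trans) (simp del: ennreal_plus fact_Suc add: ennreal_plus[symmetric])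
qed


lemma G_scale: assumes "\<sigma> > 0" shows "(\<integral>\<^sup>+t. G n \<sigma> t \<partial>lborel) = (\<integral>\<^sup>+t. G n 1 t \<partial>lborel)"
proof -
  have "(\<integral>\<^sup>+t. G n \<sigma> t \<partial>lborel) = ennreal \<bar>\<sigma>\<bar> * (\<integral>\<^sup>+t. G n \<sigma> (0 + \<sigma> * t) \<partial>lborel)"
    using assms by (intro nn_integral_real_affine) auto
  also have "\<dots> = (\<integral>\<^sup>+t. ennreal \<sigma> * G n \<sigma> (\<sigma> * t) \<partial>lborel)"
    using assms by (subst nn_integral_cmult) auto
  also have "\<dots> = (\<integral>\<^sup>+t. G n 1 t \<partial>lborel)"
  proof (intro nn_integral_cong)
    fix t :: real
    show "ennreal \<sigma> * G n \<sigma> (\<sigma> * t) = G n 1 t"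
    proof (cases "t > 0")
      case True
      have "\<sigma> * ((\<sigma> / (\<sigma> * t)) ^ n * exp (- \<sigma> / (\<sigma> * t)) / (\<sigma> * t)) = (1/t)^n * exp (-1/t) / t"
        using assms True by (simp add: field_simps)
      then show ?thesis using True assms unfolding G_def
        by (simp add: ennreal_mult[symmetric] mult.assoc[symmetric])
    next
      case False
      then have "\<not> \<sigma> * t > 0" using assms by (simp add: zero_less_mult_iff)
      then show ?thesis using False unfolding G_def by simp
    qed
  qed
  finally show ?thesis .
qed

lemma term_bound:
  fixes l pi gi y \<sigma> :: real
  assumes "0 < l" "0 < pi" "pi \<le> 1" "0 < gi" "0 < y" "y * (pi/gi) \<le> \<sigma>"
  shows "pi / (l*gi/pi) * exp (-y/(l*gi/pi)) \<le> (\<sigma>/l)/y * exp (-(y*(pi/gi)/l))"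
proof -
  have e: "-y/(l*gi/pi) = -(y*(pi/gi)/l)" using assms by (simp add: field_simps)
  have a: "pi / (l*gi/pi) = pi * ((pi/gi)/l)" using assms by (simp add: field_simps)
  have b: "pi * ((pi/gi)/l) \<le> (pi/gi)/l" using assms by (intro mult_left_le_one_le) auto
  have c: "(pi/gi)/l \<le> (\<sigma>/l)/y" using assms
    by (simp add: divide_right_mono le_divide_eq mult.commute)
  show ?thesis unfolding e a
    by (rule mult_right_mono) (use b c in auto)
qed


definition sig :: "(nat \<Rightarrow> real) \<Rightarrow> real^'k \<Rightarrow> real^'k \<Rightarrow> nat \<Rightarrow> (nat \<Rightarrow> 'k) \<Rightarrow> real" where
  "sig x g p n s = (\<Sum>j<n. x j * (p$(s j)/g$(s j)))"

lemma simplex_le1: assumes "p \<in> prob_simplex" shows "p$i \<le> 1" "p$i > 0"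
proof -
  have "p$i \<le> (\<Sum>i\<in>UNIV. p$i)" using assms
    by (intro member_le_sum) (auto simp: prob_simplex_def less_imp_le)
  then show "p$i \<le> 1" using assms by (simp add: prob_simplex_def)
  show "p$i > 0" using assms by (simp add: prob_simplex_def)
qed

lemma sig_pos: assumes "g \<in> prob_simplex" "p \<in> prob_simplex" "\<forall>j<n. x j > 0" "n \<ge> 1"
  shows "sig x g p n s > 0"
  unfolding sig_def using assms simplex_le1[OF assms(1)] simplex_le1[OF assms(2)]
  by (intro sum_pos) (auto simp: lessThan_empty_iff)

lemma pointwise:
  fixes g p :: "real^'k"
  assumes g: "g \<in> prob_simplex" and p: "p \<in> prob_simplex" and l: "l > 0" and x: "\<forall>j<n. x j > 0"
  shows "(\<Prod>j<n. mix_density l g p (x j)) / l \<le>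
    (\<Sum>s\<in>PiE {..<n} (\<lambda>_. UNIV). (1/(\<Prod>j<n. x j)) * ((sig x g p n s / l)^n * exp(- sig x g p n s/l) / l))"
proof -
  define T where "T j i = p$i / comp_scale l g p i * exp(-x j/comp_scale l g p i)" for j i
  have "(\<Prod>j<n. mix_density l g p (x j)) = (\<Prod>j\<in>{..<n}. \<Sum>i\<in>UNIV. T j i)"
    unfolding mix_density_def T_def by simp
  also have "\<dots> = (\<Sum>s\<in>PiE {..<n} (\<lambda>_. UNIV). \<Prod>j<n. T j (s j))"
    by (rule prod_sum_PiE) auto
  finally have e: "(\<Prod>j<n. mix_density l g p (x j)) / l = (\<Sum>s\<in>PiE {..<n} (\<lambda>_. UNIV). (\<Prod>j<n. T j (s j)) / l)"
    by (simp add: sum_divide_distrib)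
  show ?thesis unfolding e
  proof (rule sum_mono)
    fix s :: "nat \<Rightarrow> 'k"
    let ?\<sigma> = "sig x g p n s"
    have le: "x j * (p$(s j)/g$(s j)) \<le> ?\<sigma>" if "j < n" for j
      unfolding sig_def using that x simplex_le1[OF g] simplex_le1[OF p]
      by (intro member_le_sum) (auto intro!: mult_nonneg_nonneg divide_nonneg_nonneg less_imp_le)
    have "(\<Prod>j<n. T j (s j)) \<le> (\<Prod>j<n. (?\<sigma>/l)/x j * exp (-(x j*(p$(s j)/g$(s j))/l)))"
    proof (rule prod_mono)
      fix j assume "j \<in> {..<n}"
      then have j: "j < n" by simp
      have "0 \<le> T j (s j)" unfolding T_def comp_scale_def using simplex_le1[OF g] simplex_le1[OF p] l
        by (intro mult_nonneg_nonneg divide_nonneg_nonneg) (auto intro: less_imp_le)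
      moreover have "T j (s j) \<le> (?\<sigma>/l)/x j * exp (-(x j*(p$(s j)/g$(s j))/l))"
        unfolding T_def comp_scale_def
        by (rule term_bound) (use l x j simplex_le1[OF g] simplex_le1[OF p] le[OF j] in auto)
      ultimately show "0 \<le> T j (s j) \<and> T j (s j) \<le> (?\<sigma>/l)/x j * exp (-(x j*(p$(s j)/g$(s j))/l))" by simp
    qed
    also have "\<dots> = (\<Prod>j<n. (?\<sigma>/l)/x j) * (\<Prod>j<n. exp (-(x j*(p$(s j)/g$(s j))/l)))"
      by (rule prod.distrib)
    also have "(\<Prod>j<n. exp (-(x j*(p$(s j)/g$(s j))/l))) = exp (\<Sum>j<n. -(x j*(p$(s j)/g$(s j))/l))"
      by (simp add: exp_sum)
    also have "(\<Sum>j<n. -(x j*(p$(s j)/g$(s j))/l)) = - ?\<sigma>/l"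
      unfolding sig_def by (simp add: sum_negf sum_divide_distrib)
    also have "(\<Prod>j<n. (?\<sigma>/l)/x j) = (?\<sigma>/l)^n / (\<Prod>j<n. x j)"
      by (simp only: prod_dividef prod_constant card_lessThan) (simp add: power_divide)
    finally have "(\<Prod>j<n. T j (s j)) \<le> (?\<sigma>/l)^n / (\<Prod>j<n. x j) * exp (- ?\<sigma>/l)" .
    then have "(\<Prod>j<n. T j (s j)) / l \<le> (?\<sigma>/l)^n / (\<Prod>j<n. x j) * exp (- ?\<sigma>/l) / l"
      using l by (intro divide_right_mono) auto
    then show "(\<Prod>j<n. T j (s j)) / l \<le> (1/(\<Prod>j<n. x j)) * ((?\<sigma> / l)^n * exp(- ?\<sigma>/l) / l)"
      by simp
  qed
qed


lemma mix_pos: assumes "g \<in> prob_simplex" "p \<in> prob_simplex" "l > 0"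
  shows "mix_density l g p y > 0"
  unfolding mix_density_def comp_scale_def using assms simplex_le1[OF assms(1)] simplex_le1[OF assms(2)]
  by (intro sum_pos) auto

lemma inner_meas[measurable]: "(\<lambda>l. ennreal ((\<Prod>j<n. mix_density l g p (x j)) / l)) \<in> borel_measurable borel"
  unfolding mix_density_def comp_scale_def by measurable

lemma inner_pos:
  assumes g: "g \<in> prob_simplex" and p: "p \<in> prob_simplex"
  shows "(\<integral>\<^sup>+ l\<in>{0<..}. ennreal ((\<Prod>j<n. mix_density l g p (x j)) / l) \<partial>lborel) \<noteq> 0"
proof
  assume "(\<integral>\<^sup>+ l\<in>{0<..}. ennreal ((\<Prod>j<n. mix_density l g p (x j)) / l) \<partial>lborel) = 0"
  then have "AE l in lborel. ennreal ((\<Prod>j<n. mix_density l g p (x j)) / l) * indicator {0<..} l = 0"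
    by (subst (asm) nn_integral_0_iff_AE) auto
  then have "AE l in lborel. l \<notin> {1..2::real}"
  proof (rule AE_mp, intro AE_I2 impI)
    fix l :: real assume h: "ennreal ((\<Prod>j<n. mix_density l g p (x j)) / l) * indicator {0<..} l = 0"
    show "l \<notin> {1..2}"
    proof
      assume "l \<in> {1..2}"
      then have l: "l > 0" by auto
      have "(\<Prod>j<n. mix_density l g p (x j)) / l > 0"
        using mix_pos[OF g p l] l by (intro divide_pos_pos prod_pos) auto
      then show False using h l by simp
    qed
  qed
  then have "emeasure lborel {1..2::real} = 0"
    by (subst (asm) AE_iff_measurable[of "{1..2}"]) auto
  then show False by simp
qed

lemma inner_bound:
  fixes g p :: "real^'k"
  assumes g: "g \<in> prob_simplex" and p: "p \<in> prob_simplex" and x: "\<forall>j<n. x j > 0" and n: "n \<ge> 1"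
  shows "(\<integral>\<^sup>+ l\<in>{0<..}. ennreal ((\<Prod>j<n. mix_density l g p (x j)) / l) \<partial>lborel)
     \<le> (\<Sum>s\<in>PiE {..<n} (\<lambda>_. UNIV::'k set). ennreal (1/(\<Prod>j<n. x j)) * (\<integral>\<^sup>+t. G n 1 t \<partial>lborel))"
proof -
  have P: "(\<Prod>j<n. x j) > 0" using x by (intro prod_pos) auto
  have "(\<integral>\<^sup>+ l\<in>{0<..}. ennreal ((\<Prod>j<n. mix_density l g p (x j)) / l) \<partial>lborel)
     \<le> (\<integral>\<^sup>+ l. (\<Sum>s\<in>PiE {..<n} (\<lambda>_. UNIV::'k set). ennreal (1/(\<Prod>j<n. x j)) * G n (sig x g p n s) l) \<partial>lborel)"
  proof (intro nn_integral_mono)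
    fix l :: real
    show "ennreal ((\<Prod>j<n. mix_density l g p (x j)) / l) * indicator {0<..} l
       \<le> (\<Sum>s\<in>PiE {..<n} (\<lambda>_. UNIV::'k set). ennreal (1/(\<Prod>j<n. x j)) * G n (sig x g p n s) l)"
    proof (cases "l > 0")
      case False then show ?thesis by simp
    next
      case True
      have "ennreal ((\<Prod>j<n. mix_density l g p (x j)) / l) \<le>
         ennreal (\<Sum>s\<in>PiE {..<n} (\<lambda>_. UNIV::'k set). (1/(\<Prod>j<n. x j)) * ((sig x g p n s / l)^n * exp(- sig x g p n s/l) / l))"
        by (intro ennreal_leI pointwise g p True x)
      also have "\<dots> = (\<Sum>s\<in>PiE {..<n} (\<lambda>_. UNIV::'k set). ennreal (1/(\<Prod>j<n. x j)) * G n (sig x g p n s) l)"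
        unfolding G_def using True P sig_pos[OF g p x n]
        apply (subst sum_ennreal[symmetric])
         apply (use sig_pos[OF g p x n] P True in \<open>auto intro!: mult_nonneg_nonneg divide_nonneg_nonneg less_imp_le\<close>)[1]
        apply (intro sum.cong refl)
        subgoal for s
        proof -
          have "ennreal (1/(\<Prod>j<n. x j) * ((sig x g p n s / l)^n * exp(- sig x g p n s/l) / l))
             = ennreal (1/(\<Prod>j<n. x j)) * ennreal ((sig x g p n s / l)^n * exp(- sig x g p n s/l) / l)"
            using sig_pos[OF g p x n, of s] P True
            by (intro ennreal_mult) (auto intro!: mult_nonneg_nonneg divide_nonneg_nonneg less_imp_le)
          moreover have "indicator {0<..} l = (1::ennreal)" using True by simp
          ultimately show ?thesis by (metis mult_1_right)
        qed
        done
      finally show ?thesis using True by simp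
    qed
  qed
  also have "\<dots> = (\<Sum>s\<in>PiE {..<n} (\<lambda>_. UNIV::'k set). ennreal (1/(\<Prod>j<n. x j)) * (\<integral>\<^sup>+ l. G n (sig x g p n s) l \<partial>lborel))"
    by (subst nn_integral_sum) (auto simp: nn_integral_cmult)
  also have "\<dots> = (\<Sum>s\<in>PiE {..<n} (\<lambda>_. UNIV::'k set). ennreal (1/(\<Prod>j<n. x j)) * (\<integral>\<^sup>+t. G n 1 t \<partial>lborel))"
    using sig_pos[OF g p x n] by (intro sum.cong refl) (subst G_scale, auto)
  finally show ?thesis .
qed

lemma vn_meas[measurable]: "(\<lambda>v::real^'k. v $ i) \<in> borel_measurable borel"
  by (intro borel_measurable_continuous_onI continuous_intros)

theorem theorem3:
  fixes \<pi>0 :: "((real^'k) \<times> (real^'k)) measure"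
    and x :: "nat \<Rightarrow> real" and n :: nat
  assumes "prob_space \<pi>0"
    and "sets \<pi>0 = sets borel"
    and "AE \<theta> in \<pi>0. fst \<theta> \<in> prob_simplex \<and> snd \<theta> \<in> prob_simplex"
    and "n \<ge> 1"
    and "\<forall>j<n. x j > 0"
  shows "0 < (\<integral>\<^sup>+ \<theta>. (\<integral>\<^sup>+ l\<in>{0<..}.
                 ennreal ((\<Prod>j<n. mix_density l (fst \<theta>) (snd \<theta>) (x j)) / l) \<partial>lborel) \<partial>\<pi>0)
    \<and> (\<integral>\<^sup>+ \<theta>. (\<integral>\<^sup>+ l\<in>{0<..}.
                 ennreal ((\<Prod>j<n. mix_density l (fst \<theta>) (snd \<theta>) (x j)) / l) \<partial>lborel) \<partial>\<pi>0) < \<infinity>"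
proof -
  interpret P: prob_space \<pi>0 by (rule assms(1))
  define I where "I \<theta> = (\<integral>\<^sup>+ l\<in>{0<..}.
                 ennreal ((\<Prod>j<n. mix_density l (fst \<theta>) (snd \<theta>) (x j)) / l) \<partial>lborel)" for \<theta> :: "(real^'k) \<times> (real^'k)"
  define C where "C = (\<Sum>s\<in>PiE {..<n} (\<lambda>_. UNIV::'k set). ennreal (1/(\<Prod>j<n. x j)) * (\<integral>\<^sup>+t. G n 1 t \<partial>lborel))"
  have Cfin: "C < \<infinity>"
    unfolding C_def using K_finite[OF assms(4)]
    by (simp add: ennreal_mult_less_top finite_PiE of_nat_less_top)
  have meas2: "(\<lambda>(\<theta>::(real^'k)\<times>(real^'k), l::real). ennreal ((\<Prod>j<n. mix_density l (fst \<theta>) (snd \<theta>) (x j)) / l) * indicator {0<..} l) \<in> borel_measurable ((borel \<Otimes>\<^sub>M borel) \<Otimes>\<^sub>M lborel)"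
    unfolding mix_density_def comp_scale_def by measurable
  have se: "sets (\<pi>0 \<Otimes>\<^sub>M lborel) = sets ((borel \<Otimes>\<^sub>M borel) \<Otimes>\<^sub>M lborel)"
  proof (rule sets_pair_measure_cong)
    show "sets \<pi>0 = sets (borel \<Otimes>\<^sub>M borel :: ((real^'k)\<times>(real^'k)) measure)"
      by (simp only: assms(2) borel_prod)
  qed (rule refl)
  have meas3: "(\<lambda>(\<theta>::(real^'k)\<times>(real^'k), l::real). ennreal ((\<Prod>j<n. mix_density l (fst \<theta>) (snd \<theta>) (x j)) / l) * indicator {0<..} l) \<in> borel_measurable (\<pi>0 \<Otimes>\<^sub>M lborel)"
    using meas2 unfolding measurable_cong_sets[OF se refl] .
  have Imeas: "I \<in> borel_measurable \<pi>0"
    unfolding I_def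
    by (rule lborel.borel_measurable_nn_integral) (use meas3 in simp)
  have up: "integral\<^sup>N \<pi>0 I \<le> C"
  proof -
    have "integral\<^sup>N \<pi>0 I \<le> (\<integral>\<^sup>+\<theta>. C \<partial>\<pi>0)"
    proof (rule nn_integral_mono_AE)
      show "AE \<theta> in \<pi>0. I \<theta> \<le> C"
        using assms(3) proof (rule AE_mp, intro AE_I2 impI)
        fix \<theta> :: "(real^'k)\<times>(real^'k)"
        assume "fst \<theta> \<in> prob_simplex \<and> snd \<theta> \<in> prob_simplex"
        then show "I \<theta> \<le> C" unfolding I_def C_def
          by (intro inner_bound assms(4,5)) auto
      qed
    qed
    also have "\<dots> = C" by (simp add: P.emeasure_space_1)
    finally show ?thesis .
  qed
  have pos: "integral\<^sup>N \<pi>0 I \<noteq> 0"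
  proof
    assume "integral\<^sup>N \<pi>0 I = 0"
    then have "AE \<theta> in \<pi>0. I \<theta> = 0" using Imeas by (simp add: nn_integral_0_iff_AE)
    then have "AE \<theta> in \<pi>0. False"
      using assms(3) proof (rule AE_mp[OF _ AE_mp], intro AE_I2 impI)
      fix \<theta> :: "(real^'k)\<times>(real^'k)"
      assume "fst \<theta> \<in> prob_simplex \<and> snd \<theta> \<in> prob_simplex" "I \<theta> = 0"
      then show False unfolding I_def using inner_pos[of "fst \<theta>" "snd \<theta>"] by auto
    qed
    then show False by simp
  qed
  have "integral\<^sup>N \<pi>0 I < \<infinity>" using up Cfin by (rule le_less_trans)
  moreover have "0 < integral\<^sup>N \<pi>0 I" using pos by (simp add: zero_less_iff_neq_zero)
  ultimately show ?thesis unfolding I_def by blast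
qed

end
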